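(* Let $h>0$, $n\in\mathbb{N}$, and let $\lambda:\mathbb{T}\to\mathbb{R}$ be an $n$-cycle with values $\lambda_0,\dots,\lambda_{n-1}\in\mathbb{R}\setminus\{\tfrac1h\}$, i.e. $\lambda(t)=\lambda_k$ whenever $t/h\equiv k \pmod n$. Assume $0<|e_{-\lambda}(nh)|\neq 1$. Let $f:\mathbb{T}\to\mathbb{R}$ be arbitrary. Then the equation $$\Delta_h y(t)+\lambda(t)y(t)=f(t),\qquad t\in\mathbb{T},$$ has Hyers–Ulam stability on $\mathbb{T}$ with Hyers–Ulam stability constant $$K_0(-\lambda)=\frac{h\,|e_{-\lambda}(nh)|}{\bigl|1-|e_{-\lambda}(nh)|\bigr|}\max\{S_0(-\lambda),\dots,S_{n-1}(-\lambda)\}.$$ Moreover, if $|e_{-\lambda}(nh)|>1$, then $K_0(-\lambda)$ is the minimum Hyers–Ulam stability constant for this equation.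
   Context: Fix $h>0$ and let $\mathbb{T}=\{0,h,2h,3h,\dots\}$. For $x:\mathbb{T}\to\mathbb{R}$, $\Delta_h x(t)=\frac{x(t+h)-x(t)}{h}$ and $\Delta_h^2x=\Delta_h(\Delta_h x)$, $\Delta_h^3x=\Delta_h(\Delta_h^2 x)$. An $n$-cycle is a function $\mu:\mathbb{T}\to\mathbb{R}$ with $\mu(t)=\mu_k$ whenever $t/h\equiv k\pmod n$, $k\in\{0,\dots,n-1\}$, which has period $n$ and no smaller period. For such $\mu$ define the discrete exponential $e_\mu(t)=\prod_{k=0}^{t/h-1}(1+h\mu(kh))$ (empty product $=1$), so $e_\mu(nh)=\prod_{k=0}^{n-1}(1+h\mu_k)$. For $k\in\{0,\dots,n-1\}$ define $$S_k(\mu)=\sum_{j=1}^{n}\prod_{i=0}^{j-1}\frac{1}{|1+h\mu_{(k+i)\bmod n}|},$$ (e.g. $S_0(\mu)=\frac{1}{|1+h\mu_0|}+\frac{1}{|1+h\mu_0||1+h\mu_1|}+\dots+\frac{1}{|1+h\mu_0|\cdots|1+h\mu_{n-1}|}$), and, when $0<|e_\mu(nh)|\neq1$, $$K_0(\mu)=\frac{h|e_\mu(nh)|}{\bigl|1-|e_\mu(nh)|\bigr|}\max\{S_0(\mu),\dots,S_{n-1}(\mu)\}.$$ Here $-\lambda$ denotes the $n$-cycle with values $-\lambda_0,\dots,-\lambda_{n-1}$. Hyers–Ulam stability: an equation $\mathcal{L}[y](t)=f(t)$, $t\in\mathbb{T}$ (with $\mathcal{L}$ a linear difference operator) has Hyers–Ulam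 stability on $\mathbb{T}$ with Hyers–Ulam stability constant $K>0$ if for every $\varepsilon>0$ and every $\xi:\mathbb{T}\to\mathbb{R}$ with $|\mathcal{L}[\xi](t)-f(t)|\le\varepsilon$ for all $t\in\mathbb{T}$, there is a solution $y:\mathbb{T}\to\mathbb{R}$ of the equation with $|\xi(t)-y(t)|\le K\varepsilon$ for all $t\in\mathbb{T}$. The minimum Hyers–Ulam stability constant is the smallest such $K$. *)

theory Defs
  imports Complex_Main
begin

text \<open>Functions on T = {0, h, 2h, ...} are represented as functions nat => real,
  where index k stands for the point t = k*h.\<close>

definition delta_h :: "real \<Rightarrow> (nat \<Rightarrow> real) \<Rightarrow> nat \<Rightarrow> real" where
  "delta_h h x k = (x (k + 1) - x k) / h"

definition is_cycle :: "nat \<Rightarrow> (nat \<Rightarrow> real) \<Rightarrow> bool" where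
  "is_cycle n mu \<longleftrightarrow> n \<ge> 1 \<and> (\<forall>k. mu (k + n) = mu k) \<and>
     (\<forall>m. 0 < m \<and> m < n \<longrightarrow> \<not> (\<forall>k. mu (k + m) = mu k))"

definition dexp :: "real \<Rightarrow> (nat \<Rightarrow> real) \<Rightarrow> nat \<Rightarrow> real" where
  "dexp h mu k = (\<Prod>i<k. 1 + h * mu i)"

definition S_k :: "real \<Rightarrow> nat \<Rightarrow> (nat \<Rightarrow> real) \<Rightarrow> nat \<Rightarrow> real" where
  "S_k h n mu k = (\<Sum>j=1..n. \<Prod>i<j. 1 / \<bar>1 + h * mu ((k + i) mod n)\<bar>)"

definition K0 :: "real \<Rightarrow> nat \<Rightarrow> (nat \<Rightarrow> real) \<Rightarrow> real" where
  "K0 h n mu = h * \<bar>dexp h mu n\<bar> / \<bar>1 - \<bar>dexp h mu n\<bar>\<bar> *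
                 Max ((\<lambda>k. S_k h n mu k) ` {0..<n})"

definition HU_stable :: "((nat \<Rightarrow> real) \<Rightarrow> nat \<Rightarrow> real) \<Rightarrow> (nat \<Rightarrow> real) \<Rightarrow> real \<Rightarrow> bool" where
  "HU_stable L f K \<longleftrightarrow> K > 0 \<and>
     (\<forall>\<epsilon>>0. \<forall>\<xi>. (\<forall>t. \<bar>L \<xi> t - f t\<bar> \<le> \<epsilon>) \<longrightarrow>
        (\<exists>y. (\<forall>t. L y t = f t) \<and> (\<forall>t. \<bar>\<xi> t - y t\<bar> \<le> K * \<epsilon>)))"

definition min_HU_constant :: "((nat \<Rightarrow> real) \<Rightarrow> nat \<Rightarrow> real) \<Rightarrow> (nat \<Rightarrow> real) \<Rightarrow> real \<Rightarrow> bool" where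
  "min_HU_constant L f K \<longleftrightarrow> HU_stable L f K \<and> (\<forall>K'. HU_stable L f K' \<longrightarrow> K \<le> K')"

definition L_op :: "real \<Rightarrow> (nat \<Rightarrow> real) \<Rightarrow> (nat \<Rightarrow> real) \<Rightarrow> nat \<Rightarrow> real" where
  "L_op h lam y t = delta_h h y t + lam t * y t"

end

theory Submission imports Defs begin

lemma prod_add_split: "(\<Prod>i<m+p. (g::nat\<Rightarrow>real) i) = (\<Prod>i<m. g i) * (\<Prod>i<p. g (m+i))"
  by (induction p) (auto simp: ac_simps)

lemma sum_add_split: "(\<Sum>i<m+p. (g::nat\<Rightarrow>real) i) = (\<Sum>i<m. g i) + (\<Sum>i<p. g (m+i))"
  by (induction p) (auto simp: ac_simps)

lemma prod_rot:
  fixes F :: "nat \<Rightarrow> real"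
  assumes "\<And>k. F (k+n) = F k" "\<And>k. F k \<noteq> 0"
  shows "(\<Prod>i<n. F (k+i)) = (\<Prod>i<n. F i)"
proof (induction k)
  case 0 then show ?case by simp
next
  case (Suc k)
  have "(\<Prod>i<Suc n. F (k+i)) = F k * (\<Prod>i<n. F (Suc k+i))"
    by (subst prod.lessThan_Suc_shift) simp
  moreover have "(\<Prod>i<Suc n. F (k+i)) = (\<Prod>i<n. F (k+i)) * F k"
    using assms(1)[of k] by (simp add: add.commute)
  ultimately have "F k * (\<Prod>i<n. F (Suc k+i)) = F k * (\<Prod>i<n. F (k+i))" by (simp add: ac_simps)
  then show ?case using Suc assms(2)[of k] by simp
qed

locale cyc =
  fixes h :: real and n :: nat and lam :: "nat \<Rightarrow> real"
  assumes hpos: "h > 0" and per: "\<And>k. lam (k+n) = lam k" and n1: "n \<ge> 1"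
    and nz: "\<And>k. lam k \<noteq> 1/h"
begin

definition a where "a i = 1 + h * - lam i"
definition E where "E = (\<Prod>i<n. a i)"
definition c where "c i = 1 / \<bar>a i\<bar>"
definition R where "R k m = (\<Prod>i<m. c (k+i))"
definition Sp where "Sp k = (\<Sum>j<n. R k (Suc j))"

lemma a_nz: "a i \<noteq> 0"
proof
  assume "a i = 0"
  then have "h * lam i = 1" by (simp add: a_def)
  then have "lam i = 1/h" using hpos by (simp add: field_simps)
  with nz show False by blast
qed

lemma c_pos: "c i > 0" using a_nz by (simp add: c_def)
lemma R_pos: "R k m > 0" unfolding R_def using c_pos by (simp add: prod_pos)

lemma lam_per: "lam (k + q*n) = lam k"
proof (induction q)
  case (Suc q)
  have "lam (k + Suc q * n) = lam ((k + q*n) + n)" by (simp add: ac_simps)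
  then show ?case using Suc per by simp
qed simp
lemma lam_mod: "lam (k mod n) = lam k"
  using lam_per[of "k mod n" "k div n"] by simp
lemma a_per: "a (k+n) = a k" by (simp add: a_def per)
lemma c_per: "c (k+n) = c k" by (simp add: c_def a_per)

lemma E_nz: "E \<noteq> 0" unfolding E_def using a_nz by simp

lemma a_rot: "(\<Prod>i<n. a (k+i)) = E"
  unfolding E_def by (rule prod_rot) (auto simp: a_per a_nz)

lemma R_n: "R k n = 1 / \<bar>E\<bar>"
proof -
  have "R k n = (\<Prod>i<n. c i)" unfolding R_def by (rule prod_rot) (use c_per c_pos in \<open>auto simp: less_le\<close>)
  also have "\<dots> = 1 / (\<Prod>i<n. \<bar>a i\<bar>)" unfolding c_def by (simp add: prod_dividef)
  also have "\<dots> = 1 / \<bar>E\<bar>" unfolding E_def by (simp add: abs_prod)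
  finally show ?thesis .
qed

lemma R_add: "R k (m+p) = R k m * R (k+m) p"
  unfolding R_def by (simp add: prod_add_split add.assoc)

lemma R_Suc: "R k (Suc m) = c k * R (Suc k) m"
  unfolding R_def by (subst prod.lessThan_Suc_shift) simp

lemma Sp_eq: "S_k h n (\<lambda>k. - lam k) k = Sp k"
  unfolding S_k_def Sp_def R_def c_def a_def
  by (simp add: sum.atLeast1_atMost_eq lam_mod)

definition M where "M = Max ((\<lambda>k. S_k h n (\<lambda>k. - lam k) k) ` {0..<n})"

lemma Sp_pos: "Sp k > 0"
proof -
  have "0 \<in> {..<n}" using n1 by simp
  then show ?thesis unfolding Sp_def using R_pos by (intro sum_pos) auto
qed

lemma Sp_le_M: "Sp k \<le> M"
proof -
  have "Sp k = S_k h n (\<lambda>k. - lam k) (k mod n)"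
    unfolding Sp_eq[symmetric] S_k_def by (simp add: mod_add_left_eq)
  also have "\<dots> \<le> M" unfolding M_def using n1 by (intro Max_ge) auto
  finally show ?thesis .
qed

lemma M_pos: "M > 0" using Sp_pos[of 0] Sp_le_M[of 0] by linarith

lemma Sp_rec: "\<bar>a k\<bar> * Sp k = 1 + Sp (Suc k) - 1/\<bar>E\<bar>"
proof -
  have ac: "\<bar>a k\<bar> * c k = 1" using a_nz by (simp add: c_def)
  have "\<bar>a k\<bar> * Sp k = (\<Sum>j<n. \<bar>a k\<bar> * c k * R (Suc k) j)"
    unfolding Sp_def R_Suc by (simp add: sum_distrib_left ac_simps)
  also have "\<dots> = (\<Sum>j<n. R (Suc k) j)" using ac by simp
  also have "\<dots> = (\<Sum>j<Suc n. R (Suc k) j) - R (Suc k) n" by simp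
  also have "(\<Sum>j<Suc n. R (Suc k) j) = R (Suc k) 0 + Sp (Suc k)"
    unfolding Sp_def by (subst sum.lessThan_Suc_shift) simp
  finally show ?thesis using R_n[of "Suc k"] by (simp add: R_def)
qed

lemma dexp_E: "dexp h (\<lambda>k. - lam k) n = E"
  unfolding dexp_def E_def a_def by simp

lemma L_diff: "L_op h lam (\<lambda>t. x t - d t) t = L_op h lam x t - L_op h lam d t"
  unfolding L_op_def delta_h_def using hpos by (simp add: field_simps)

lemma L_rec: "L_op h lam d t = e \<longleftrightarrow> d (Suc t) = a t * d t + h * e"
  unfolding L_op_def delta_h_def a_def using hpos by (auto simp: field_simps)

lemma stab_lt1:
  assumes E1: "\<bar>E\<bar> < 1"
  shows "HU_stable (L_op h lam) f (h * \<bar>E\<bar> / \<bar>1 - \<bar>E\<bar>\<bar> * M)"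
  unfolding HU_stable_def
proof (intro conjI allI impI)
  have "\<bar>E\<bar> > 0" using E_nz by simp
  then show "h * \<bar>E\<bar> / \<bar>1 - \<bar>E\<bar>\<bar> * M > 0" using hpos M_pos E1 by simp
next
  fix \<epsilon> :: real and \<xi>
  assume "\<epsilon> > 0" and bnd: "\<forall>t. \<bar>L_op h lam \<xi> t - f t\<bar> \<le> \<epsilon>"
  define e where "e t = L_op h lam \<xi> t - f t" for t
  define d where "d = rec_nat 0 (\<lambda>k x. a k * x + h * e k)"
  have d0: "d 0 = 0" and dS: "\<And>k. d (Suc k) = a k * d k + h * e k" by (simp_all add: d_def)
  define W where "W k = \<bar>E\<bar> / (1 - \<bar>E\<bar>) * Sp k" for k
  have W0: "W k \<ge> 0" for k using Sp_pos[of k] E1 by (simp add: W_def)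
  have WS: "W (Suc k) = \<bar>a k\<bar> * W k + 1" for k
  proof -
    have h1: "\<bar>a k\<bar> * W k = \<bar>E\<bar> / (1 - \<bar>E\<bar>) * (1 + Sp (Suc k) - 1/\<bar>E\<bar>)"
      unfolding W_def Sp_rec[symmetric] by (simp add: ac_simps)
    have gen: "\<And>x S::real. 0 < x \<Longrightarrow> x < 1 \<Longrightarrow> x/(1-x)*(1+S-1/x) = x/(1-x)*S - 1"
      by (simp add: field_simps)
    have h2: "\<bar>E\<bar> / (1 - \<bar>E\<bar>) * (1 + Sp (Suc k) - 1/\<bar>E\<bar>) = \<bar>E\<bar> / (1 - \<bar>E\<bar>) * Sp (Suc k) - 1"
      using gen[of "\<bar>E\<bar>" "Sp (Suc k)"] E1 E_nz by simp
    have h3: "W (Suc k) = \<bar>E\<bar> / (1 - \<bar>E\<bar>) * Sp (Suc k)" by (simp add: W_def)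
    show ?thesis using h1 h2 h3 by linarith
  qed
  have dW: "\<bar>d k\<bar> \<le> h * \<epsilon> * W k" for k
  proof (induction k)
    case 0 then show ?case using d0 W0[of 0] hpos \<open>\<epsilon>>0\<close> by simp
  next
    case (Suc k)
    have "\<bar>d (Suc k)\<bar> \<le> \<bar>a k\<bar> * \<bar>d k\<bar> + h * \<bar>e k\<bar>"
      unfolding dS using hpos abs_triangle_ineq[of "a k * d k" "h * e k"] by (simp add: abs_mult)
    also have "\<dots> \<le> \<bar>a k\<bar> * (h * \<epsilon> * W k) + h * \<epsilon>"
      using Suc bnd hpos unfolding e_def by (intro add_mono mult_left_mono) auto
    also have "\<dots> = h * \<epsilon> * W (Suc k)" unfolding WS by (simp add: algebra_simps)
    finally show ?case .
  qed
  show "\<exists>y. (\<forall>t. L_op h lam y t = f t) \<and> (\<forall>t. \<bar>\<xi> t - y t\<bar> \<le> h * \<bar>E\<bar> / \<bar>1 - \<bar>E\<bar>\<bar> * M * \<epsilon>)"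
  proof (intro exI conjI allI)
    fix t
    have "L_op h lam d t = e t" using L_rec dS by blast
    then show "L_op h lam (\<lambda>t. \<xi> t - d t) t = f t" unfolding L_diff e_def by simp
    have "\<bar>\<xi> t - (\<xi> t - d t)\<bar> = \<bar>d t\<bar>" by simp
    also have "\<dots> \<le> h * \<epsilon> * W t" by (rule dW)
    also have "\<dots> \<le> h * \<epsilon> * (\<bar>E\<bar> / (1 - \<bar>E\<bar>) * M)"
      unfolding W_def using Sp_le_M[of t] E1 hpos \<open>\<epsilon>>0\<close> E_nz
      by (intro mult_left_mono) (auto intro: mult_left_mono)
    also have "\<dots> = h * \<bar>E\<bar> / \<bar>1 - \<bar>E\<bar>\<bar> * M * \<epsilon>" using E1 by simp
    finally show "\<bar>\<xi> t - (\<xi> t - d t)\<bar> \<le> h * \<bar>E\<bar> / \<bar>1 - \<bar>E\<bar>\<bar> * M * \<epsilon>" .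
  qed
qed

definition G where "G k j = R k (Suc j)"
definition rr where "rr = 1 / \<bar>E\<bar>"

lemma G_pos: "G k j > 0" unfolding G_def by (rule R_pos)

lemma G_n: "G k (j + n) = rr * G k j"
proof -
  have "G k (j+n) = R k (Suc j + n)" by (simp add: G_def)
  also have "\<dots> = G k j * rr" unfolding R_add R_n G_def rr_def by simp
  finally show ?thesis by simp
qed

lemma G_qn: "G k (q*n + i) = rr^q * G k i"
proof (induction q)
  case (Suc q)
  have "G k (Suc q * n + i) = G k ((q*n+i) + n)" by (simp add: ac_simps)
  then show ?case using Suc G_n by simp
qed simp

lemma G_qn': "G k (i + q*n) = rr^q * G k i" using G_qn[of k q i] by (simp add: add.commute)

lemma G_block: "sum (G k) {q*n..<q*n+n} = rr^q * Sp k"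
proof -
  have "sum (G k) {0 + q*n..<n + q*n} = (\<Sum>i\<in>{0..<n}. G k (i + q*n))"
    by (rule sum.shift_bounds_nat_ivl)
  also have "\<dots> = (\<Sum>i<n. rr^q * G k i)" by (simp add: atLeast0LessThan G_qn')
  also have "\<dots> = rr^q * Sp k" unfolding Sp_def G_def by (simp add: sum_distrib_left)
  finally show ?thesis by (simp add: ac_simps)
qed

lemma G_partial: "sum (G k) {..<q*n} = (\<Sum>p<q. rr^p) * Sp k"
proof (induction q)
  case (Suc q)
  have "sum (G k) {..<Suc q*n} = sum (G k) {..<q*n} + (\<Sum>i<n. G k (q*n+i))"
    by (metis sum_add_split mult_Suc add.commute)
  also have "(\<Sum>i<n. G k (q*n+i)) = rr^q * Sp k"
    using G_qn unfolding Sp_def G_def by (simp add: sum_distrib_left)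
  finally show ?case using Suc by (simp add: algebra_simps)
qed simp

context
  assumes Egt: "\<bar>E\<bar> > 1"
begin

lemma rr_bnd: "0 < rr" "rr < 1" using Egt by (auto simp: rr_def)

lemma G_summable: "summable (G k)"
proof (rule bounded_imp_summable)
  show "0 \<le> G k j" for j using G_pos[of k j] by simp
  fix N
  have gs: "(\<lambda>p. rr^p) sums (1/(1-rr))" using rr_bnd by (intro geometric_sums) simp
  have sub: "{..N} \<subseteq> {..<Suc N * n}"
  proof
    fix x assume "x \<in> {..N}"
    moreover have "Suc N * 1 \<le> Suc N * n" using n1 by (intro mult_le_mono2)
    ultimately show "x \<in> {..<Suc N * n}" by auto
  qed
  have "sum (G k) {..N} \<le> sum (G k) {..<Suc N * n}"
    using G_pos by (intro sum_mono2[OF _ sub]) (auto simp: less_imp_le)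
  also have "\<dots> = (\<Sum>p<Suc N. rr^p) * Sp k" by (rule G_partial)
  also have "\<dots> \<le> (1/(1-rr)) * Sp k"
    using Sp_pos[of k] rr_bnd sum_le_suminf[OF sums_summable[OF gs], of "{..<Suc N}"] sums_unique[OF gs]
    by (intro mult_right_mono) auto
  finally show "sum (G k) {..N} \<le> 1/(1-rr) * Sp k" .
qed

lemma G_sum: "suminf (G k) = Sp k / (1 - rr)"
proof -
  have s1: "(\<lambda>q. sum (G k) {q*n..<q*n+n}) sums suminf (G k)"
    using sums_group[OF summable_sums[OF G_summable] ] n1 by simp
  have gs: "(\<lambda>p. rr^p) sums (1/(1-rr))" using rr_bnd by (intro geometric_sums) simp
  have "(\<lambda>q. sum (G k) {q*n..<q*n+n}) sums (1/(1-rr) * Sp k)"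
    unfolding G_block using sums_mult2[OF gs] by simp
  then show ?thesis using sums_unique2[OF s1] by simp
qed

end

definition A where "A k m = (\<Prod>i<m. 1 / a (k+i))"

lemma A_abs: "\<bar>A k m\<bar> = R k m"
  unfolding A_def R_def c_def by (simp add: abs_prod)

lemma A_Suc: "A k (Suc m) = (1 / a k) * A (Suc k) m"
  unfolding A_def by (subst prod.lessThan_Suc_shift) simp

definition dstar where "dstar e k = - h * (\<Sum>j. e (k+j) * A k (Suc j))"

lemma dstar_summable:
  assumes "\<And>t. \<bar>e t\<bar> \<le> B" and "\<bar>E\<bar> > 1"
  shows "summable (\<lambda>j. \<bar>e (k+j) * A k (Suc j)\<bar>)"
proof (rule summable_comparison_test')
  show "summable (\<lambda>j. B * G k j)" using G_summable[OF assms(2)] by (rule summable_mult)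
  fix j
  show "norm \<bar>e (k+j) * A k (Suc j)\<bar> \<le> B * G k j"
    unfolding G_def using assms(1)[of "k+j"] A_abs[of k "Suc j"]
    by (simp add: abs_mult mult_right_mono)
qed

lemma dstar_bound:
  assumes "\<And>t. \<bar>e t\<bar> \<le> B" and "\<bar>E\<bar> > 1"
  shows "\<bar>dstar e k\<bar> \<le> h * B * Sp k / (1 - rr)"
proof -
  have sa: "summable (\<lambda>j. \<bar>e (k+j) * A k (Suc j)\<bar>)" by (rule dstar_summable[OF assms])
  have "\<bar>\<Sum>j. e (k+j) * A k (Suc j)\<bar> \<le> (\<Sum>j. \<bar>e (k+j) * A k (Suc j)\<bar>)"
    by (rule summable_rabs[OF sa])
  also have "\<dots> \<le> (\<Sum>j. B * G k j)"
  proof (rule suminf_le[OF _ sa])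
    show "summable (\<lambda>j. B * G k j)" using G_summable[OF assms(2)] by (rule summable_mult)
    fix j show "\<bar>e (k+j) * A k (Suc j)\<bar> \<le> B * G k j"
      unfolding G_def using assms(1)[of "k+j"] A_abs[of k "Suc j"]
      by (simp add: abs_mult mult_right_mono)
  qed
  also have "\<dots> = B * (Sp k / (1 - rr))" using suminf_mult[OF G_summable[OF assms(2)]] G_sum[OF assms(2)] by simp
  finally have X: "\<bar>\<Sum>j. e (k+j) * A k (Suc j)\<bar> \<le> B * Sp k / (1 - rr)" by simp
  have "h * \<bar>\<Sum>j. e (k+j) * A k (Suc j)\<bar> \<le> h * (B * Sp k / (1 - rr))"
    using X hpos by (intro mult_left_mono) auto
  then show ?thesis unfolding dstar_def using hpos by (simp add: abs_mult mult.assoc)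
qed

lemma dstar_rec:
  assumes "\<And>t. \<bar>e t\<bar> \<le> B" and "\<bar>E\<bar> > 1"
  shows "dstar e (Suc k) = a k * dstar e k + h * e k"
proof -
  define F where "F j = e (k+j) * A (Suc k) j" for j
  have sk: "summable (\<lambda>j. e (k+j) * A k (Suc j))"
    using summable_rabs_cancel[OF dstar_summable[OF assms]] .
  have eq: "a k * (e (k+j) * A k (Suc j)) = F j" for j
    unfolding F_def A_Suc using a_nz[of k] by simp
  have sF: "summable F" using summable_mult[OF sk, of "a k"] unfolding eq .
  have m: "a k * (\<Sum>j. e (k+j) * A k (Suc j)) = suminf F"
    using suminf_mult[OF sk, of "a k"] unfolding eq by simp
  have F0: "F 0 = e k" by (simp add: F_def A_def)
  have "(\<Sum>j. e (Suc k + j) * A (Suc k) (Suc j)) = (\<Sum>j. F (Suc j))" by (simp add: F_def)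
  also have "\<dots> = suminf F - e k" using suminf_split_head[OF sF] F0 by simp
  finally have X: "(\<Sum>j. e (Suc k + j) * A (Suc k) (Suc j)) = suminf F - e k" .
  have "dstar e (Suc k) = -h * (suminf F - e k)" unfolding dstar_def X[symmetric] by simp
  also have "\<dots> = a k * dstar e k + h * e k" unfolding dstar_def by (simp add: algebra_simps m[symmetric])
  finally show ?thesis .
qed


lemma K_eq: assumes "\<bar>E\<bar> > 1" shows "h * \<bar>E\<bar> / \<bar>1 - \<bar>E\<bar>\<bar> * M = h * M / (1 - rr)"
  using assms unfolding rr_def by (simp add: field_simps)

lemma stab_gt1:
  assumes E1: "\<bar>E\<bar> > 1"
  shows "HU_stable (L_op h lam) f (h * \<bar>E\<bar> / \<bar>1 - \<bar>E\<bar>\<bar> * M)"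
  unfolding HU_stable_def K_eq[OF E1]
proof (intro conjI allI impI)
  show "h * M / (1 - rr) > 0" using hpos M_pos rr_bnd[OF E1] by simp
next
  fix \<epsilon> :: real and \<xi>
  assume "\<epsilon> > 0" and bnd: "\<forall>t. \<bar>L_op h lam \<xi> t - f t\<bar> \<le> \<epsilon>"
  define e where "e t = L_op h lam \<xi> t - f t" for t
  have eb: "\<And>t. \<bar>e t\<bar> \<le> \<epsilon>" using bnd e_def by simp
  show "\<exists>y. (\<forall>t. L_op h lam y t = f t) \<and> (\<forall>t. \<bar>\<xi> t - y t\<bar> \<le> h * M / (1 - rr) * \<epsilon>)"
  proof (intro exI conjI allI)
    fix t
    have "L_op h lam (dstar e) t = e t" by (rule L_rec[THEN iffD2, OF dstar_rec[OF eb E1]])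
    then show "L_op h lam (\<lambda>t. \<xi> t - dstar e t) t = f t" unfolding L_diff e_def by simp
    have "\<bar>\<xi> t - (\<xi> t - dstar e t)\<bar> = \<bar>dstar e t\<bar>" by simp
    also have "\<dots> \<le> h * \<epsilon> * Sp t / (1 - rr)" by (rule dstar_bound[OF eb E1])
    also have "\<dots> \<le> h * \<epsilon> * M / (1 - rr)"
      using Sp_le_M[of t] rr_bnd[OF E1] hpos \<open>\<epsilon>>0\<close>
      by (intro divide_right_mono mult_left_mono) auto
    finally show "\<bar>\<xi> t - (\<xi> t - dstar e t)\<bar> \<le> h * M / (1 - rr) * \<epsilon>" by (simp add: ac_simps)
  qed
qed

lemma w_prod: "(\<And>t. w (Suc t) = a t * w t) \<Longrightarrow> w (k+m) = (\<Prod>i<m. a (k+i)) * w k"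
  by (induction m) (auto simp: ac_simps)

lemma w_qn: assumes "\<And>t. w (Suc t) = a t * w t" shows "w (q*n) = E^q * w 0"
proof (induction q)
  case (Suc q)
  have "w (Suc q * n) = w (q*n + n)" by (simp add: add.commute)
  also have "\<dots> = E * w (q*n)" using w_prod[OF assms, of "q*n" n] a_rot by simp
  finally show ?case using Suc by simp
qed simp

lemma min_gt1:
  assumes E1: "\<bar>E\<bar> > 1" and K': "HU_stable (L_op h lam) f K'"
  shows "h * \<bar>E\<bar> / \<bar>1 - \<bar>E\<bar>\<bar> * M \<le> K'"
proof -
  have fin: "finite ((\<lambda>k. S_k h n (\<lambda>k. - lam k) k) ` {0..<n})" by simp
  have ne: "(\<lambda>k. S_k h n (\<lambda>k. - lam k) k) ` {0..<n} \<noteq> {}" using n1 by auto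
  obtain r0 where "r0 \<in> {0..<n}" and r0: "S_k h n (\<lambda>k. - lam k) r0 = M"
    using Max_in[OF fin ne] unfolding M_def by auto
  then have SpM: "Sp r0 = M" using Sp_eq by simp
  define e where "e t = (if r0 \<le> t then sgn (A r0 (Suc (t - r0))) else 0)" for t
  have eb: "\<And>t. \<bar>e t\<bar> \<le> 1" by (simp add: e_def abs_sgn_eq)
  define \<xi> where "\<xi> = rec_nat 0 (\<lambda>k x. a k * x + h * (f k + e k))"
  have "\<xi> (Suc t) = a t * \<xi> t + h * (f t + e t)" for t by (simp add: \<xi>_def)
  then have Lxi: "L_op h lam \<xi> t = f t + e t" for t by (rule L_rec[THEN iffD2])
  have "\<forall>t. \<bar>L_op h lam \<xi> t - f t\<bar> \<le> 1" using Lxi eb by simp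
  then obtain y where Ly: "\<forall>t. L_op h lam y t = f t" and yb: "\<forall>t. \<bar>\<xi> t - y t\<bar> \<le> K' * 1"
    using K' unfolding HU_stable_def by (meson zero_less_one)
  define d where "d t = \<xi> t - y t" for t
  have Ld: "L_op h lam d t = e t" for t
    using L_diff[where x=\<xi> and d=y and t=t] Lxi Ly unfolding d_def[abs_def] by simp
  define w where "w t = d t - dstar e t" for t
  have wS: "w (Suc t) = a t * w t" for t
    using L_rec[THEN iffD1, OF Ld[of t]] dstar_rec[OF eb E1, where k=t] unfolding w_def by (simp add: algebra_simps)
  define B2 where "B2 = K' + h * M / (1 - rr)"
  have wb: "\<bar>w t\<bar> \<le> B2" for t
  proof -
    have "\<bar>dstar e t\<bar> \<le> h * 1 * Sp t / (1 - rr)" by (rule dstar_bound[OF eb E1])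
    also have "\<dots> \<le> h * M / (1 - rr)"
      using Sp_le_M[of t] rr_bnd[OF E1] hpos by (intro divide_right_mono mult_left_mono) auto
    finally have D: "\<bar>dstar e t\<bar> \<le> h * M / (1 - rr)" .
    have Y: "\<bar>\<xi> t - y t\<bar> \<le> K'" using yb by simp
    show ?thesis unfolding w_def d_def B2_def
      using D Y abs_triangle_ineq4[of "\<xi> t - y t" "dstar e t"] by linarith
  qed
  have w0: "w 0 = 0"
  proof (rule ccontr)
    assume nz: "w 0 \<noteq> 0"
    obtain q where q: "B2 / \<bar>w 0\<bar> < \<bar>E\<bar>^q" using real_arch_pow[OF E1] by blast
    have "\<bar>w (q*n)\<bar> = \<bar>E\<bar>^q * \<bar>w 0\<bar>" using w_qn[OF wS] by (simp add: abs_mult power_abs)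
    also have "\<dots> > B2" using q nz by (simp add: divide_less_eq)
    finally show False using wb[of "q*n"] by simp
  qed
  have wz: "w t = 0" for t by (induction t) (auto simp: w0 wS)
  have "dstar e r0 = - h * (\<Sum>j. G r0 j)"
  proof -
    have "e (r0+j) * A r0 (Suc j) = G r0 j" for j
      unfolding e_def G_def A_abs[symmetric] by (simp add: sgn_mult_self_eq abs_sgn)
    then show ?thesis unfolding dstar_def by simp
  qed
  then have dr: "d r0 = - (h * M / (1 - rr))"
    using wz[of r0] G_sum[OF E1, of r0] SpM unfolding w_def by simp
  have P: "h * M / (1 - rr) > 0" using hpos rr_bnd[OF E1] M_pos by simp
  have "\<bar>d r0\<bar> = h * M / (1 - rr)" unfolding dr using P by (simp only: abs_minus_cancel abs_of_pos)
  then show ?thesis using yb K_eq[OF E1] unfolding d_def by (metis mult.right_neutral)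
qed

end

theorem theorem2p5:
  fixes h :: real and n :: nat and lam f :: "nat \<Rightarrow> real"
  assumes "h > 0"
    and "is_cycle n lam"
    and "\<forall>k. lam k \<noteq> 1 / h"
    and "0 < \<bar>dexp h (\<lambda>k. - lam k) n\<bar>"
    and "\<bar>dexp h (\<lambda>k. - lam k) n\<bar> \<noteq> 1"
  shows "HU_stable (L_op h lam) f (K0 h n (\<lambda>k. - lam k))
    \<and> (\<bar>dexp h (\<lambda>k. - lam k) n\<bar> > 1 \<longrightarrow>
         min_HU_constant (L_op h lam) f (K0 h n (\<lambda>k. - lam k)))"
proof -
  interpret cyc h n lam
    using assms unfolding is_cycle_def by unfold_locales auto
  have K: "K0 h n (\<lambda>k. - lam k) = h * \<bar>E\<bar> / \<bar>1 - \<bar>E\<bar>\<bar> * M"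
    unfolding K0_def M_def dexp_E ..
  have Ed: "dexp h (\<lambda>k. - lam k) n = E" by (rule dexp_E)
  show ?thesis
  proof (cases "\<bar>E\<bar> > 1")
    case True
    then show ?thesis unfolding K Ed min_HU_constant_def
      using stab_gt1[OF True] min_gt1[OF True] by blast
  next
    case False
    then have "\<bar>E\<bar> < 1" using assms(5) Ed by auto
    then show ?thesis unfolding K Ed using stab_lt1 False by blast
  qed
qed

end
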